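(* For all $f,g\in\mathcal{S}(\Omega)$, \[f\cdot g=f\cdot g^\circ_s+\mathrm{im}\,(f\cdot g'_s)\] in $\Omega\setminus\mathbb{R}$, where $\mathrm{im}\,(f\cdot g'_s)$ denotes $x\mapsto\mathrm{im}(x)\,(f\cdot g'_s)(x)$. Moreover, for all $x\in\Omega\setminus\mathbb{R}$, \[(f\cdot g)(x)=f(x)\,g^\circ_s(x)+\mathrm{im}(x)\big(f(x)\,g'_s(x)\big)-\big(\mathrm{im}(x),f'_s(x),g(x^c)\big).\]
   Context: Let $A$ be a finite-dimensional real algebra with unit $1$ ($\mathbb{R}$ identified with $\mathbb{R}1$) which is alternative (the associator $(x,y,z)=(xy)z-x(yz)$ is alternating), with a $^*$-involution $x\mapsto x^c$ (real linear, $(x^c)^c=x$, $(xy)^c=y^cx^c$, $r^c=r$ for $r\in\mathbb{R}$). Let $t(x)=x+x^c$, $n(x)=xx^c$, $\mathbb{S}_A=\{J\in A:t(J)=0,n(J)=1\}$ (assumed non-empty), $Q_A=\mathbb{R}\cup\{x\in A:t(x),n(x)\in\mathbb{R},\ 4n(x)>t(x)^2\}$; every $x\in Q_A$ is $\alpha+\beta J$ with $\alpha,\beta\in\mathbb{R}$, $J\in\mathbb{S}_A$, and $x^c=\alpha-\beta J$; $\mathrm{re}(x)=t(x)/2$, $\mathrm{im}(x)=x-\mathrm{re}(x)$. Let $D\subseteq\mathbb{C}$ be non-empty and invariant under complex conjugation and $\Omega=\{\alpha+\beta J:\alpha+i\beta\in D,\ J\in\mathbb{S}_A\}$. Let $A_{\mathbb{C}}=\{a+\imath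 b:a,b\in A\}$ with product $(a+\imath b)(a'+\imath b')=aa'-bb'+\imath(ab'+ba')$ and conjugation $\overline{a+\imath b}=a-\imath b$. A stem function is $F=F_1+\imath F_2:D\to A_{\mathbb{C}}$ with $F(\bar z)=\overline{F(z)}$; it induces the slice function $f=\mathcal{I}(F)$, $f(\alpha+\beta J)=F_1(\alpha+i\beta)+JF_2(\alpha+i\beta)$; $\mathcal{S}(\Omega)$ is the set of slice functions on $\Omega$ and the slice product is $f\cdot g=\mathcal{I}(FG)$ (pointwise product of stem functions). The spherical value of $f$ is the slice function $f^\circ_s(x)=\frac12(f(x)+f(x^c))$ on $\Omega$ and the spherical derivative is the slice function $f'_s(x)=\frac12\mathrm{im}(x)^{-1}(f(x)-f(x^c))$ on $\Omega\setminus\mathbb{R}$; slice products of functions with different domains are taken on the intersection of the domains. *)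

theory Defs
  imports "HOL-Analysis.Analysis"
begin

text \<open>The algebra A is a finite-dimensional real vector space (a type of class
euclidean_space) with a real-bilinear product mul (not assumed associative),
a unit e and an involution cj.\<close>

definition assoc :: "('a::real_vector \<Rightarrow> 'a \<Rightarrow> 'a) \<Rightarrow> 'a \<Rightarrow> 'a \<Rightarrow> 'a \<Rightarrow> 'a" where
  "assoc mul x y z = mul (mul x y) z - mul x (mul y z)"

definition alt_star_alg :: "('a::euclidean_space \<Rightarrow> 'a \<Rightarrow> 'a) \<Rightarrow> 'a \<Rightarrow> ('a \<Rightarrow> 'a) \<Rightarrow> bool" where
  "alt_star_alg mul e cj \<longleftrightarrow>
     bilinear mul \<and> e \<noteq> 0 \<and>
     (\<forall>x. mul e x = x \<and> mul x e = x) \<and>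
     (\<forall>x y. assoc mul x x y = 0 \<and> assoc mul x y x = 0 \<and> assoc mul y x x = 0) \<and>
     linear cj \<and> (\<forall>x. cj (cj x) = x) \<and>
     (\<forall>x y. cj (mul x y) = mul (cj y) (cj x)) \<and>
     (\<forall>r::real. cj (r *\<^sub>R e) = r *\<^sub>R e)"

definition realsA :: "'a::real_vector \<Rightarrow> 'a set" where
  "realsA e = range (\<lambda>r::real. r *\<^sub>R e)"

definition trc :: "('a::real_vector \<Rightarrow> 'a) \<Rightarrow> 'a \<Rightarrow> 'a" where
  "trc cj x = x + cj x"

definition nrm :: "('a::real_vector \<Rightarrow> 'a \<Rightarrow> 'a) \<Rightarrow> ('a \<Rightarrow> 'a) \<Rightarrow> 'a \<Rightarrow> 'a" where
  "nrm mul cj x = mul x (cj x)"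

definition sphA :: "('a::real_vector \<Rightarrow> 'a \<Rightarrow> 'a) \<Rightarrow> 'a \<Rightarrow> ('a \<Rightarrow> 'a) \<Rightarrow> 'a set" where
  "sphA mul e cj = {J. trc cj J = 0 \<and> nrm mul cj J = e}"

definition reA :: "('a::real_vector \<Rightarrow> 'a) \<Rightarrow> 'a \<Rightarrow> 'a" where
  "reA cj x = (1/2) *\<^sub>R trc cj x"

definition imA :: "('a::real_vector \<Rightarrow> 'a) \<Rightarrow> 'a \<Rightarrow> 'a" where
  "imA cj x = x - reA cj x"

definition ainv :: "('a::real_vector \<Rightarrow> 'a \<Rightarrow> 'a) \<Rightarrow> 'a \<Rightarrow> 'a \<Rightarrow> 'a" where
  "ainv mul e x = (THE y. mul x y = e \<and> mul y x = e)"

definition OmegaD :: "('a::real_vector \<Rightarrow> 'a \<Rightarrow> 'a) \<Rightarrow> 'a \<Rightarrow> ('a \<Rightarrow> 'a) \<Rightarrow> complex set \<Rightarrow> 'a set" where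
  "OmegaD mul e cj D = {Re z *\<^sub>R e + Im z *\<^sub>R J | z J. z \<in> D \<and> J \<in> sphA mul e cj}"

text \<open>A stem function F = F1 + i F2 : D \<rightarrow> A_C is given by its two components;
F(conj z) = conj(F z) means F1(cnj z) = F1 z and F2(cnj z) = - F2 z.\<close>
definition is_stem :: "complex set \<Rightarrow> (complex \<Rightarrow> 'a::real_vector) \<Rightarrow> (complex \<Rightarrow> 'a) \<Rightarrow> bool" where
  "is_stem D F1 F2 \<longleftrightarrow> (\<forall>z\<in>D. F1 (cnj z) = F1 z \<and> F2 (cnj z) = - F2 z)"

definition induces :: "('a::real_vector \<Rightarrow> 'a \<Rightarrow> 'a) \<Rightarrow> 'a \<Rightarrow> ('a \<Rightarrow> 'a) \<Rightarrow> complex set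
    \<Rightarrow> (complex \<Rightarrow> 'a) \<Rightarrow> (complex \<Rightarrow> 'a) \<Rightarrow> ('a \<Rightarrow> 'a) \<Rightarrow> bool" where
  "induces mul e cj D F1 F2 f \<longleftrightarrow>
     (\<forall>z\<in>D. \<forall>J\<in>sphA mul e cj. f (Re z *\<^sub>R e + Im z *\<^sub>R J) = F1 z + mul J (F2 z))"

text \<open>Slice functions on Omega_D (only their values on Omega_D matter).\<close>
definition slice_fun :: "('a::real_vector \<Rightarrow> 'a \<Rightarrow> 'a) \<Rightarrow> 'a \<Rightarrow> ('a \<Rightarrow> 'a) \<Rightarrow> complex set
    \<Rightarrow> ('a \<Rightarrow> 'a) \<Rightarrow> bool" where
  "slice_fun mul e cj D f \<longleftrightarrow> (\<exists>F1 F2. is_stem D F1 F2 \<and> induces mul e cj D F1 F2 f)"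

text \<open>Slice product f \<cdot> g = I(FG) on Omega_D, where F, G are stem functions on D
inducing f, g; (F1 + iF2)(G1 + iG2) = F1G1 - F2G2 + i(F1G2 + F2G1).\<close>
definition sprod :: "('a::real_vector \<Rightarrow> 'a \<Rightarrow> 'a) \<Rightarrow> 'a \<Rightarrow> ('a \<Rightarrow> 'a) \<Rightarrow> complex set
    \<Rightarrow> ('a \<Rightarrow> 'a) \<Rightarrow> ('a \<Rightarrow> 'a) \<Rightarrow> 'a \<Rightarrow> 'a" where
  "sprod mul e cj D f g x = (SOME y. \<exists>F1 F2 G1 G2 z J.
      is_stem D F1 F2 \<and> induces mul e cj D F1 F2 f \<and>
      is_stem D G1 G2 \<and> induces mul e cj D G1 G2 g \<and>
      z \<in> D \<and> J \<in> sphA mul e cj \<and> x = Re z *\<^sub>R e + Im z *\<^sub>R J \<and>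
      y = (mul (F1 z) (G1 z) - mul (F2 z) (G2 z)) + mul J (mul (F1 z) (G2 z) + mul (F2 z) (G1 z)))"

definition sph_val :: "('a::real_vector \<Rightarrow> 'a) \<Rightarrow> ('a \<Rightarrow> 'a) \<Rightarrow> 'a \<Rightarrow> 'a" where
  "sph_val cj f x = (1/2) *\<^sub>R (f x + f (cj x))"

definition sph_der :: "('a::real_vector \<Rightarrow> 'a \<Rightarrow> 'a) \<Rightarrow> 'a \<Rightarrow> ('a \<Rightarrow> 'a) \<Rightarrow> ('a \<Rightarrow> 'a) \<Rightarrow> 'a \<Rightarrow> 'a" where
  "sph_der mul e cj f x = (1/2) *\<^sub>R mul (ainv mul e (imA cj x)) (f x - f (cj x))"

end

theory Submission
  imports Defs
begin

locale alg =
  fixes mul :: "'a::euclidean_space \<Rightarrow> 'a \<Rightarrow> 'a" and e :: 'a and cj :: "'a \<Rightarrow> 'a"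
  assumes A: "alt_star_alg mul e cj"
begin

lemma bil: "bilinear mul" using A by (simp add: alt_star_alg_def)
lemma e0: "e \<noteq> 0" using A by (simp add: alt_star_alg_def)
lemma el[simp]: "mul e x = x" and er[simp]: "mul x e = x" using A by (auto simp: alt_star_alg_def)
lemma lincj: "linear cj" using A by (simp add: alt_star_alg_def)
lemma cjcj[simp]: "cj (cj x) = x" using A by (simp add: alt_star_alg_def)
lemma cjmul: "cj (mul x y) = mul (cj y) (cj x)" using A by (simp add: alt_star_alg_def)
lemma cjr[simp]: "cj (r *\<^sub>R e) = r *\<^sub>R e" using A by (simp add: alt_star_alg_def)
lemma cje[simp]: "cj e = e" using cjr[of 1] by simp
lemma al1: "assoc mul x x y = 0" and al2: "assoc mul y x x = 0" using A by (auto simp: alt_star_alg_def)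

lemma ms[simp]:
  "mul (x + y) z = mul x z + mul y z" "mul x (y + z) = mul x y + mul x z"
  "mul (x - y) z = mul x z - mul y z" "mul x (y - z) = mul x y - mul x z"
  "mul (c *\<^sub>R x) y = c *\<^sub>R mul x y" "mul x (c *\<^sub>R y) = c *\<^sub>R mul x y"
  "mul (- x) y = - mul x y" "mul x (- y) = - mul x y"
  "mul 0 y = 0" "mul x 0 = 0"
  using bil by (simp_all add: bilinear_ladd bilinear_radd bilinear_lsub bilinear_rsub
      bilinear_lmul bilinear_rmul bilinear_lneg bilinear_rneg bilinear_lzero bilinear_rzero)

lemma cjs[simp]: "cj (x + y) = cj x + cj y" "cj (x - y) = cj x - cj y" "cj (c *\<^sub>R x) = c *\<^sub>R cj x"
  "cj (- x) = - cj x" "cj 0 = 0"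
  using lincj by (simp_all add: linear_add linear_diff linear_scale linear_neg linear_0)

lemma swap23: "assoc mul y x z = - assoc mul y z x"
proof -
  have "assoc mul y (x+z) (x+z) = 0" by (rule al2)
  hence "assoc mul y x x + assoc mul y x z + assoc mul y z x + assoc mul y z z = 0"
    by (simp add: assoc_def algebra_simps)
  thus ?thesis using al2[of y x] al2[of y z] by (simp add: eq_neg_iff_add_eq_0)
qed

definition "S = sphA mul e cj"

lemma SJ: assumes "J \<in> S" shows "cj J = - J" "mul J J = - e" "mul J (mul J y) = - y"
    "mul (mul J J) y = - y"
proof -
  from assms have t: "J + cj J = 0" and n: "mul J (cj J) = e"
    by (auto simp: S_def sphA_def trc_def nrm_def)
  from t have "cj J = 0 - J" by (metis add_diff_cancel_left')
  thus c: "cj J = - J" by simp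
  from n c have "- mul J J = e" by simp
  thus m: "mul J J = - e" by (metis minus_minus)
  thus "mul (mul J J) y = - y" by simp
  with al1[of J y] show "mul J (mul J y) = - y" by (simp add: assoc_def)
qed

lemma Sneg: assumes "J \<in> S" shows "- J \<in> S"
proof -
  have c: "cj J = - J" and m: "mul J J = - e" using SJ[OF assms] by auto
  have "trc cj (- J) = 0" unfolding trc_def using c by simp
  moreover have "nrm mul cj (- J) = e" unfolding nrm_def using c m by simp
  ultimately show ?thesis by (simp add: S_def sphA_def)
qed

lemma key: assumes "J \<in> S"
  shows "mul J (mul (mul J a) b) + mul (mul J a) (mul J b) - mul J (mul a (mul J b)) = - mul a b"
proof -
  have i: "\<And>y. mul J (mul J y) = - y" using SJ[OF assms] by simp
  have c1: "assoc mul J a (mul J b) = - assoc mul J (mul J b) a" by (rule swap23)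
  have c2: "assoc mul J (mul J b) a = - mul J (assoc mul J b a)"
    using SJ[OF assms] by (simp add: assoc_def i)
  have c3: "assoc mul J b a = - assoc mul J a b" by (rule swap23)
  have C: "assoc mul J a (mul J b) = - mul J (assoc mul J a b)" using c1 c2 c3 by simp
  have "mul J (mul (mul J a) b) = mul J (mul J (mul a b) + assoc mul J a b)"
    by (simp add: assoc_def)
  also have "\<dots> = - mul a b + mul J (assoc mul J a b)" by (simp add: i)
  finally have X: "mul J (mul (mul J a) b) = - mul a b + mul J (assoc mul J a b)" .
  have Y: "mul (mul J a) (mul J b) = mul J (mul a (mul J b)) + assoc mul J a (mul J b)"
    by (simp add: assoc_def)
  show ?thesis using X Y C by simp
qed


lemma repr: assumes J: "J \<in> S" and J': "J' \<in> S" and b: "b \<noteq> 0"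
  and eq: "a *\<^sub>R e + b *\<^sub>R J = a' *\<^sub>R e + b' *\<^sub>R J'"
  shows "a = a' \<and> ((b' = b \<and> J' = J) \<or> (b' = - b \<and> J' = - J))"
proof -
  have "cj (a *\<^sub>R e + b *\<^sub>R J) = cj (a' *\<^sub>R e + b' *\<^sub>R J')" using eq by simp
  hence eq2: "a *\<^sub>R e - b *\<^sub>R J = a' *\<^sub>R e - b' *\<^sub>R J'" using SJ(1)[OF J] SJ(1)[OF J'] by simp
  have "(a *\<^sub>R e + b *\<^sub>R J) + (a *\<^sub>R e - b *\<^sub>R J) = (a' *\<^sub>R e + b' *\<^sub>R J') + (a' *\<^sub>R e - b' *\<^sub>R J')"
    using eq eq2 by simp
  hence "a *\<^sub>R e + a *\<^sub>R e = a' *\<^sub>R e + a' *\<^sub>R e" by simp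
  hence "(a - a') *\<^sub>R e + (a - a') *\<^sub>R e = 0" by (simp add: algebra_simps)
  hence "2 *\<^sub>R ((a - a') *\<^sub>R e) = 0" by (simp only: scaleR_2)
  hence "(a - a') *\<^sub>R e = 0" by simp
  hence aa: "a = a'" using e0 by simp
  with eq have bb: "b *\<^sub>R J = b' *\<^sub>R J'" by simp
  have "mul (b *\<^sub>R J) (b *\<^sub>R J) = mul (b' *\<^sub>R J') (b' *\<^sub>R J')" using bb by simp
  hence "(b*b) *\<^sub>R e = (b'*b') *\<^sub>R e" using SJ(2)[OF J] SJ(2)[OF J'] by simp
  hence "b*b = b'*b'" using e0 by (simp add: scaleR_cancel_right)
  hence "b' * b' = b * b" by (rule sym)
  hence "b' = b \<or> b' = - b" by (simp only: square_eq_iff)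
  thus ?thesis
  proof
    assume h: "b' = b"
    hence "b *\<^sub>R J - b *\<^sub>R J' = 0" using bb by simp
    hence "b *\<^sub>R (J - J') = 0" by (simp only: scaleR_right_diff_distrib)
    hence "J - J' = 0" using b by simp
    hence "J' = J" by simp
    thus ?thesis using aa h by blast
  next
    assume h: "b' = - b"
    hence "b *\<^sub>R J + b *\<^sub>R J' = 0" using bb by simp
    hence "b *\<^sub>R (J + J') = 0" by (simp add: scaleR_right_distrib)
    hence "J + J' = 0" using b by simp
    hence "J' = - J" by (metis add.commute eq_neg_iff_add_eq_0)
    thus ?thesis using aa h by blast
  qed
qed

lemma stem_uniq: assumes "induces mul e cj D F1 F2 f" "induces mul e cj D F1' F2' f"
  and z: "z \<in> D" and J: "J \<in> S"
  shows "F1 z = F1' z \<and> F2 z = F2' z"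
proof -
  have J2: "- J \<in> sphA mul e cj" using Sneg[OF J] by (simp add: S_def)
  have J1: "J \<in> sphA mul e cj" using J by (simp add: S_def)
  have p1: "f (Re z *\<^sub>R e + Im z *\<^sub>R J) = F1 z + mul J (F2 z)"
    using assms(1) z J1 unfolding induces_def by blast
  have p2: "f (Re z *\<^sub>R e + Im z *\<^sub>R J) = F1' z + mul J (F2' z)"
    using assms(2) z J1 unfolding induces_def by blast
  have m1: "f (Re z *\<^sub>R e + Im z *\<^sub>R (- J)) = F1 z + mul (- J) (F2 z)"
    using assms(1) z J2 unfolding induces_def by blast
  have m2: "f (Re z *\<^sub>R e + Im z *\<^sub>R (- J)) = F1' z + mul (- J) (F2' z)"
    using assms(2) z J2 unfolding induces_def by blast
  have p: "F1 z + mul J (F2 z) = F1' z + mul J (F2' z)" using p1 p2 by simp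
  have m: "F1 z + mul (- J) (F2 z) = F1' z + mul (- J) (F2' z)" using m1 m2 by simp
  have "(F1 z + mul J (F2 z)) + (F1 z + mul (- J) (F2 z)) = (F1' z + mul J (F2' z)) + (F1' z + mul (- J) (F2' z))"
    using p m by simp
  hence "2 *\<^sub>R F1 z = 2 *\<^sub>R F1' z" by (simp add: scaleR_2)
  hence f1: "F1 z = F1' z" by simp
  with p have "mul J (F2 z) = mul J (F2' z)" by simp
  hence "mul J (mul J (F2 z)) = mul J (mul J (F2' z))" by simp
  hence "F2 z = F2' z" using SJ(3)[OF J] by simp
  thus ?thesis using f1 by simp
qed

definition "pf F1 F2 G1 G2 z J = (mul (F1 z) (G1 z) - mul (F2 z) (G2 z)) + mul J (mul (F1 z) (G2 z) + mul (F2 z) (G1 z))"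

lemma sprod_eq: assumes sF: "is_stem D F1 F2" and iF: "induces mul e cj D F1 F2 f"
  and sG: "is_stem D G1 G2" and iG: "induces mul e cj D G1 G2 g"
  and z: "z \<in> D" and J: "J \<in> S" and b: "Im z \<noteq> 0" and x: "x = Re z *\<^sub>R e + Im z *\<^sub>R J"
  shows "sprod mul e cj D f g x = pf F1 F2 G1 G2 z J"
proof -
  define Q where "Q y = (\<exists>F1 F2 G1 G2 z J.
      is_stem D F1 F2 \<and> induces mul e cj D F1 F2 f \<and>
      is_stem D G1 G2 \<and> induces mul e cj D G1 G2 g \<and>
      z \<in> D \<and> J \<in> sphA mul e cj \<and> x = Re z *\<^sub>R e + Im z *\<^sub>R J \<and>
      y = (mul (F1 z) (G1 z) - mul (F2 z) (G2 z)) + mul J (mul (F1 z) (G2 z) + mul (F2 z) (G1 z)))" for y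
  have "Q (pf F1 F2 G1 G2 z J)" unfolding Q_def pf_def
    apply (rule exI[of _ F1], rule exI[of _ F2], rule exI[of _ G1], rule exI[of _ G2], rule exI[of _ z], rule exI[of _ J])
    using assms unfolding S_def by simp
  hence "Q (SOME y. Q y)" by (rule someI)
  moreover have "sprod mul e cj D f g x = (SOME y. Q y)" unfolding sprod_def Q_def by simp
  ultimately have "Q (sprod mul e cj D f g x)" by simp
  then obtain F1' F2' G1' G2' z' J' where
    sF': "is_stem D F1' F2'" and iF': "induces mul e cj D F1' F2' f" and
    sG': "is_stem D G1' G2'" and iG': "induces mul e cj D G1' G2' g" and
    z': "z' \<in> D" and J'': "J' \<in> sphA mul e cj" and x': "x = Re z' *\<^sub>R e + Im z' *\<^sub>R J'" and
    y0: "sprod mul e cj D f g x = (mul (F1' z') (G1' z') - mul (F2' z') (G2' z')) + mul J' (mul (F1' z') (G2' z') + mul (F2' z') (G1' z'))"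
    unfolding Q_def by (elim exE conjE) 
  have J': "J' \<in> S" using J'' by (simp add: S_def)
  have y: "sprod mul e cj D f g x = pf F1' F2' G1' G2' z' J'" using y0 by (simp add: pf_def)
  have r: "Re z = Re z' \<and> ((Im z' = Im z \<and> J' = J) \<or> (Im z' = - Im z \<and> J' = - J))"
  proof -
    have "Re z *\<^sub>R e + Im z *\<^sub>R J = Re z' *\<^sub>R e + Im z' *\<^sub>R J'" using x x' by simp
    from repr[OF J J' b this] show ?thesis .
  qed
  have uF: "F1 z = F1' z \<and> F2 z = F2' z" by (rule stem_uniq[OF iF iF' z J])
  have uG: "G1 z = G1' z \<and> G2 z = G2' z" by (rule stem_uniq[OF iG iG' z J])
  from r show ?thesis
  proof (elim conjE disjE)
    assume "Re z = Re z'" "Im z' = Im z" "J' = J"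
    hence zz: "z' = z" "J' = J" by (auto intro: complex_eqI)
    have e1: "F1' z' = F1 z" "F2' z' = F2 z" "G1' z' = G1 z" "G2' z' = G2 z" using uF uG zz by auto
    show ?thesis unfolding y pf_def e1 zz(2) ..
  next
    assume "Re z = Re z'" "Im z' = - Im z" "J' = - J"
    hence zz: "z = cnj z'" "J' = - J" by (auto intro: complex_eqI)
    have "F1' z = F1' z'" "F2' z = - F2' z'" "G1' z = G1' z'" "G2' z = - G2' z'"
      using sF' sG' z' unfolding is_stem_def zz(1) by auto
    hence e1: "F1' z' = F1 z" "F2' z' = - F2 z" "G1' z' = G1 z" "G2' z' = - G2 z" using uF uG by auto
    show ?thesis unfolding y pf_def e1 zz(2) by simp
  qed
qed

lemma cj_pt: "J \<in> S \<Longrightarrow> cj (a *\<^sub>R e + b *\<^sub>R J) = a *\<^sub>R e + b *\<^sub>R (- J)"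
  using SJ(1)[of J] by simp

lemma im_pt: assumes "J \<in> S" shows "imA cj (a *\<^sub>R e + b *\<^sub>R J) = b *\<^sub>R J"
proof -
  have "trc cj (a *\<^sub>R e + b *\<^sub>R J) = a *\<^sub>R e + a *\<^sub>R e"
    unfolding trc_def cj_pt[OF assms] by simp
  also have "\<dots> = 2 *\<^sub>R (a *\<^sub>R e)" by (simp only: scaleR_2)
  finally have "reA cj (a *\<^sub>R e + b *\<^sub>R J) = a *\<^sub>R e" unfolding reA_def by simp
  thus ?thesis unfolding imA_def by simp
qed

lemma ainv_pt: assumes J: "J \<in> S" and b: "b \<noteq> 0"
  shows "ainv mul e (b *\<^sub>R J) = (- inverse b) *\<^sub>R J"
  unfolding ainv_def
proof (rule the_equality)
  show "mul (b *\<^sub>R J) ((- inverse b) *\<^sub>R J) = e \<and> mul ((- inverse b) *\<^sub>R J) (b *\<^sub>R J) = e"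
    using SJ(2)[OF J] b by simp
next
  fix y assume "mul (b *\<^sub>R J) y = e \<and> mul y (b *\<^sub>R J) = e"
  hence "b *\<^sub>R mul J y = e" by simp
  hence "mul J (b *\<^sub>R mul J y) = J" by simp
  hence "b *\<^sub>R (- y) = J" using SJ(3)[OF J] by simp
  hence "inverse b *\<^sub>R (b *\<^sub>R (- y)) = inverse b *\<^sub>R J" by simp
  hence "- y = inverse b *\<^sub>R J" using b by simp
  thus "y = (- inverse b) *\<^sub>R J" by (metis minus_minus scaleR_minus_left)
qed

lemma gpt: assumes "induces mul e cj D G1 G2 g" "z \<in> D" "J \<in> S"
  shows "g (Re z *\<^sub>R e + Im z *\<^sub>R J) = G1 z + mul J (G2 z)"
    "g (cj (Re z *\<^sub>R e + Im z *\<^sub>R J)) = G1 z - mul J (G2 z)"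
proof -
  show "g (Re z *\<^sub>R e + Im z *\<^sub>R J) = G1 z + mul J (G2 z)"
    using assms unfolding induces_def S_def by blast
  have J2: "- J \<in> sphA mul e cj" using Sneg[OF assms(3)] by (simp add: S_def)
  have "g (Re z *\<^sub>R e + Im z *\<^sub>R (- J)) = G1 z + mul (- J) (G2 z)"
    using assms(1,2) J2 unfolding induces_def by blast
  thus "g (cj (Re z *\<^sub>R e + Im z *\<^sub>R J)) = G1 z - mul J (G2 z)"
    unfolding cj_pt[OF assms(3)] by simp
qed

lemma sval_pt: assumes "induces mul e cj D G1 G2 g" "z \<in> D" "J \<in> S"
  shows "sph_val cj g (Re z *\<^sub>R e + Im z *\<^sub>R J) = G1 z"
proof -
  have "sph_val cj g (Re z *\<^sub>R e + Im z *\<^sub>R J) = (1/2) *\<^sub>R (G1 z + G1 z)"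
    unfolding sph_val_def gpt[OF assms] by simp
  also have "\<dots> = G1 z" by (simp only: scaleR_2[symmetric] scaleR_scaleR) simp
  finally show ?thesis .
qed

lemma sder_pt: assumes "induces mul e cj D G1 G2 g" "z \<in> D" and J: "J \<in> S" and b: "Im z \<noteq> 0"
  shows "sph_der mul e cj g (Re z *\<^sub>R e + Im z *\<^sub>R J) = (1 / Im z) *\<^sub>R G2 z"
proof -
  have d: "G1 z + mul J (G2 z) - (G1 z - mul J (G2 z)) = 2 *\<^sub>R mul J (G2 z)"
    by (simp only: scaleR_2) (simp add: algebra_simps)
  have "sph_der mul e cj g (Re z *\<^sub>R e + Im z *\<^sub>R J)
     = (1/2) *\<^sub>R mul ((- inverse (Im z)) *\<^sub>R J) (2 *\<^sub>R mul J (G2 z))"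
    unfolding sph_der_def gpt[OF assms(1,2) J] im_pt[OF J] ainv_pt[OF J b] d ..
  also have "\<dots> = ((1/2) * ((- inverse (Im z)) * 2)) *\<^sub>R mul J (mul J (G2 z))"
    by (simp only: ms scaleR_scaleR mult.commute)
  also have "\<dots> = (- inverse (Im z)) *\<^sub>R (- G2 z)"
    unfolding SJ(3)[OF J] by simp
  also have "\<dots> = (1 / Im z) *\<^sub>R G2 z" by (simp add: divide_inverse)
  finally show ?thesis .
qed

lemma sval_slice: assumes "is_stem D G1 G2" "induces mul e cj D G1 G2 g"
  shows "is_stem D G1 (\<lambda>_. 0)" "induces mul e cj D G1 (\<lambda>_. 0) (sph_val cj g)"
proof -
  show "is_stem D G1 (\<lambda>_. 0)" using assms(1) unfolding is_stem_def by simp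
  show "induces mul e cj D G1 (\<lambda>_. 0) (sph_val cj g)"
    unfolding induces_def using sval_pt[OF assms(2)] by (simp add: S_def)
qed

lemma sder_slice: assumes "is_stem D G1 G2" "induces mul e cj D G1 G2 g"
  shows "is_stem (D - \<real>) (\<lambda>w. (1 / Im w) *\<^sub>R G2 w) (\<lambda>_. 0)"
    "induces mul e cj (D - \<real>) (\<lambda>w. (1 / Im w) *\<^sub>R G2 w) (\<lambda>_. 0) (sph_der mul e cj g)"
proof -
  show "is_stem (D - \<real>) (\<lambda>w. (1 / Im w) *\<^sub>R G2 w) (\<lambda>_. 0)"
    using assms(1) unfolding is_stem_def by simp
  show "induces mul e cj (D - \<real>) (\<lambda>w. (1 / Im w) *\<^sub>R G2 w) (\<lambda>_. 0) (sph_der mul e cj g)"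
    unfolding induces_def
  proof (intro ballI)
    fix z J assume z: "z \<in> D - \<real>" and J: "J \<in> sphA mul e cj"
    hence "Im z \<noteq> 0" using complex_is_Real_iff by blast
    thus "sph_der mul e cj g (Re z *\<^sub>R e + Im z *\<^sub>R J) = (1 / Im z) *\<^sub>R G2 z + mul J 0"
      using sder_pt[OF assms(2), of z J] z J by (simp add: S_def)
  qed
qed

lemma restr: assumes "is_stem D F1 F2" "induces mul e cj D F1 F2 f"
  shows "is_stem (D - \<real>) F1 F2" "induces mul e cj (D - \<real>) F1 F2 f"
  using assms unfolding is_stem_def induces_def by auto

lemma main:
  assumes "slice_fun mul e cj D f" and "slice_fun mul e cj D g"
    and x: "x \<in> OmegaD mul e cj D - realsA e"
  shows "sprod mul e cj D f g x =
             sprod mul e cj D f (sph_val cj g) x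
             + mul (imA cj x) (sprod mul e cj (D - \<real>) f (sph_der mul e cj g) x)"
    "sprod mul e cj D f g x =
             mul (f x) (sph_val cj g x) + mul (imA cj x) (mul (f x) (sph_der mul e cj g x))
             - assoc mul (imA cj x) (sph_der mul e cj f x) (g (cj x))"
proof -
  obtain F1 F2 where sF: "is_stem D F1 F2" and iF: "induces mul e cj D F1 F2 f"
    using assms(1) unfolding slice_fun_def by blast
  obtain G1 G2 where sG: "is_stem D G1 G2" and iG: "induces mul e cj D G1 G2 g"
    using assms(2) unfolding slice_fun_def by blast
  obtain z J where z: "z \<in> D" and J0: "J \<in> sphA mul e cj" and xe: "x = Re z *\<^sub>R e + Im z *\<^sub>R J"
    using x unfolding OmegaD_def by blast
  have J: "J \<in> S" using J0 by (simp add: S_def)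
  have b: "Im z \<noteq> 0"
  proof
    assume "Im z = 0"
    hence "x \<in> realsA e" unfolding xe realsA_def by auto
    thus False using x by simp
  qed
  have zr: "z \<in> D - \<real>" using z b complex_is_Real_iff by blast
  have P: "sprod mul e cj D f g x = pf F1 F2 G1 G2 z J"
    by (rule sprod_eq[OF sF iF sG iG z J b xe])
  have P1: "sprod mul e cj D f (sph_val cj g) x = pf F1 F2 G1 (\<lambda>_. 0) z J"
    by (rule sprod_eq[OF sF iF sval_slice[OF sG iG] z J b xe])
  have P2: "sprod mul e cj (D - \<real>) f (sph_der mul e cj g) x = pf F1 F2 (\<lambda>w. (1 / Im w) *\<^sub>R G2 w) (\<lambda>_. 0) z J"
    by (rule sprod_eq[OF restr[OF sF iF] sder_slice[OF sG iG] zr J b xe])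
  have I: "imA cj x = Im z *\<^sub>R J" unfolding xe by (rule im_pt[OF J])
  show "sprod mul e cj D f g x =
             sprod mul e cj D f (sph_val cj g) x
             + mul (imA cj x) (sprod mul e cj (D - \<real>) f (sph_der mul e cj g) x)"
    unfolding P P1 P2 I pf_def using b SJ(3)[OF J] by simp
  have fx: "f x = F1 z + mul J (F2 z)" unfolding xe by (rule gpt(1)[OF iF z J])
  have gc: "g (cj x) = G1 z - mul J (G2 z)" unfolding xe by (rule gpt(2)[OF iG z J])
  have sv: "sph_val cj g x = G1 z" unfolding xe by (rule sval_pt[OF iG z J])
  have sd: "sph_der mul e cj g x = (1 / Im z) *\<^sub>R G2 z" unfolding xe by (rule sder_pt[OF iG z J b])
  have sdf: "sph_der mul e cj f x = (1 / Im z) *\<^sub>R F2 z" unfolding xe by (rule sder_pt[OF iF z J b])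
  show "sprod mul e cj D f g x =
             mul (f x) (sph_val cj g x) + mul (imA cj x) (mul (f x) (sph_der mul e cj g x))
             - assoc mul (imA cj x) (sph_der mul e cj f x) (g (cj x))"
    unfolding P fx gc sv sd sdf I pf_def assoc_def using b key[OF J, of "F2 z" "G2 z"]
    by (simp add: algebra_simps)
qed

end

theorem theorem3p4:
  fixes mul :: "'a::euclidean_space \<Rightarrow> 'a \<Rightarrow> 'a" and e :: 'a and cj :: "'a \<Rightarrow> 'a"
    and D :: "complex set" and f g :: "'a \<Rightarrow> 'a"
  assumes "alt_star_alg mul e cj"
    and "sphA mul e cj \<noteq> {}"
    and "D \<noteq> {}" and "\<forall>z\<in>D. cnj z \<in> D"
    and "slice_fun mul e cj D f" and "slice_fun mul e cj D g"
  shows "(\<forall>x\<in>OmegaD mul e cj D - realsA e.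
           sprod mul e cj D f g x =
             sprod mul e cj D f (sph_val cj g) x
             + mul (imA cj x) (sprod mul e cj (D - \<real>) f (sph_der mul e cj g) x))
       \<and> (\<forall>x\<in>OmegaD mul e cj D - realsA e.
           sprod mul e cj D f g x =
             mul (f x) (sph_val cj g x) + mul (imA cj x) (mul (f x) (sph_der mul e cj g x))
             - assoc mul (imA cj x) (sph_der mul e cj f x) (g (cj x)))"
proof -
  interpret alg mul e cj by unfold_locales (rule assms(1))
  show ?thesis using main[OF assms(5,6)] by blast
qed

end
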